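(* Let $\mu$ be a finite positive Borel measure on $\mathbb{T}$ and let $C$ be a conjugation on $L^2(\mu)$ such that $CM_\xi = M_\xi C$, where $(M_\xi f)(\xi) = \xi f(\xi)$. Then $\mu^c\ll\mu$.
   Context: A conjugation is an antilinear, isometric map $C$ with $C^2 = I$. $\mu^c(\Omega) := \mu(\{\overline{\xi}:\xi\in\Omega\})$ for Borel $\Omega\subset\mathbb{T}$. *)

theory Defs
  imports "HOL-Analysis.Analysis"
begin

abbreviation circle :: "complex set" where
  "circle \<equiv> sphere 0 1"

definition borel_measure_on_circle :: "complex measure \<Rightarrow> bool" where
  "borel_measure_on_circle M \<longleftrightarrow>
     finite_measure M \<and> space M = circle \<and> sets M = sets (restrict_space borel circle)"

text \<open>Representatives of elements of L2(mu): Borel measurable, square integrable.\<close>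
definition L2 :: "complex measure \<Rightarrow> (complex \<Rightarrow> complex) set" where
  "L2 M = {f. f \<in> borel_measurable M \<and> integrable M (\<lambda>x. (cmod (f x))\<^sup>2)}"

definition L2_eq :: "complex measure \<Rightarrow> (complex \<Rightarrow> complex) \<Rightarrow> (complex \<Rightarrow> complex) \<Rightarrow> bool" where
  "L2_eq M f g \<longleftrightarrow> (AE x in M. f x = g x)"

definition L2_norm :: "complex measure \<Rightarrow> (complex \<Rightarrow> complex) \<Rightarrow> real" where
  "L2_norm M f = sqrt (integral\<^sup>L M (\<lambda>x. (cmod (f x))\<^sup>2))"

text \<open>A conjugation on L2(mu), acting on representatives: a well-defined map of
  L2(mu) to itself (respecting a.e. equality) that is antilinear, isometric, and
  satisfies C^2 = I.\<close>
definition conjugation_L2 :: "complex measure \<Rightarrow> ((complex \<Rightarrow> complex) \<Rightarrow> (complex \<Rightarrow> complex)) \<Rightarrow> bool" where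
  "conjugation_L2 M C \<longleftrightarrow>
     (\<forall>f\<in>L2 M. C f \<in> L2 M) \<and>
     (\<forall>f\<in>L2 M. \<forall>g\<in>L2 M. L2_eq M f g \<longrightarrow> L2_eq M (C f) (C g)) \<and>
     (\<forall>f\<in>L2 M. \<forall>g\<in>L2 M. \<forall>a b. L2_eq M (C (\<lambda>x. a * f x + b * g x))
                                      (\<lambda>x. cnj a * C f x + cnj b * C g x)) \<and>
     (\<forall>f\<in>L2 M. L2_norm M (C f) = L2_norm M f) \<and>
     (\<forall>f\<in>L2 M. L2_eq M (C (C f)) f)"

definition mult_xi :: "(complex \<Rightarrow> complex) \<Rightarrow> (complex \<Rightarrow> complex)" where
  "mult_xi f = (\<lambda>z. z * f z)"

definition conj_measure :: "complex measure \<Rightarrow> complex measure" where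
  "conj_measure M = measure_of (space M) (sets M) (\<lambda>A. emeasure M (cnj ` A))"

end

theory Submission imports Defs begin

lemma circle_inverse: "cmod x = 1 \<Longrightarrow> inverse x = cnj x"
proof -
  assume "cmod x = 1"
  hence "x * cnj x = 1" using complex_norm_square[of x] by simp
  thus ?thesis by (rule inverse_unique)
qed

locale cs =
  fixes M :: "complex measure" and C :: "(complex \<Rightarrow> complex) \<Rightarrow> (complex \<Rightarrow> complex)"
  assumes bm: "borel_measure_on_circle M"
    and conj: "conjugation_L2 M C"
    and comm: "\<forall>f\<in>L2 M. L2_eq M (C (mult_xi f)) (mult_xi (C f))"
begin

lemma fin: "finite_measure M" and sp: "space M = circle" and st: "sets M = sets (restrict_space borel circle)"
  using bm unfolding borel_measure_on_circle_def by auto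

lemma C_L2: "f \<in> L2 M \<Longrightarrow> C f \<in> L2 M" using conj unfolding conjugation_L2_def by auto
lemma C_cong: "f \<in> L2 M \<Longrightarrow> g \<in> L2 M \<Longrightarrow> L2_eq M f g \<Longrightarrow> L2_eq M (C f) (C g)"
  using conj unfolding conjugation_L2_def by auto
lemma C_lin: "f \<in> L2 M \<Longrightarrow> g \<in> L2 M \<Longrightarrow> L2_eq M (C (\<lambda>x. a * f x + b * g x)) (\<lambda>x. cnj a * C f x + cnj b * C g x)"
  using conj unfolding conjugation_L2_def by auto
lemma C_norm: "f \<in> L2 M \<Longrightarrow> L2_norm M (C f) = L2_norm M f"
  using conj unfolding conjugation_L2_def by auto

lemma meas_cont: "continuous_on circle h \<Longrightarrow> h \<in> borel_measurable M"
  by (subst measurable_cong_sets[OF st refl]) (rule borel_measurable_continuous_on_restrict)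

lemma L2_mult:
  assumes h: "continuous_on circle h" and f: "f \<in> L2 M"
  shows "(\<lambda>x. h x * f x) \<in> L2 M"
proof -
  have "compact (h ` circle)" by (rule compact_continuous_image[OF h]) simp
  hence "bounded (h ` circle)" by (rule compact_imp_bounded)
  then obtain B where "\<forall>y\<in>h ` circle. norm y \<le> B" unfolding bounded_iff by blast
  hence B: "\<And>x. x \<in> circle \<Longrightarrow> cmod (h x) \<le> B" by auto
  have fm: "f \<in> borel_measurable M" and fi: "integrable M (\<lambda>x. (cmod (f x))\<^sup>2)"
    using f unfolding L2_def by auto
  have "(\<lambda>x. h x * f x) \<in> borel_measurable M" using meas_cont[OF h] fm by (rule borel_measurable_times)
  moreover have "integrable M (\<lambda>x. (cmod (h x * f x))\<^sup>2)"
  proof (rule Bochner_Integration.integrable_bound)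
    show "integrable M (\<lambda>x. B\<^sup>2 * (cmod (f x))\<^sup>2)" using fi by simp
    show "(\<lambda>x. (cmod (h x * f x))\<^sup>2) \<in> borel_measurable M" using calculation by measurable
    show "AE x in M. norm ((cmod (h x * f x))\<^sup>2) \<le> norm (B\<^sup>2 * (cmod (f x))\<^sup>2)"
    proof (rule AE_I2)
      fix x assume "x \<in> space M"
      hence "cmod (h x) \<le> B" using B sp by auto
      hence "(cmod (h x))\<^sup>2 \<le> B\<^sup>2" by (meson norm_ge_zero power_mono)
      hence "(cmod (h x))\<^sup>2 * (cmod (f x))\<^sup>2 \<le> B\<^sup>2 * (cmod (f x))\<^sup>2"
        by (simp add: mult_right_mono)
      thus "norm ((cmod (h x * f x))\<^sup>2) \<le> norm (B\<^sup>2 * (cmod (f x))\<^sup>2)"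
        by (simp add: norm_mult power_mult_distrib)
    qed
  qed
  ultimately show ?thesis unfolding L2_def by simp
qed

lemma one_L2: "(\<lambda>x. 1) \<in> L2 M"
proof -
  interpret finite_measure M by (rule fin)
  show ?thesis unfolding L2_def by simp
qed

lemma L2_eq_trans: "L2_eq M f g \<Longrightarrow> L2_eq M g h \<Longrightarrow> L2_eq M f h"
  unfolding L2_eq_def by (auto elim: AE_mp)
lemma L2_eq_sym: "L2_eq M f g \<Longrightarrow> L2_eq M g f"
  unfolding L2_eq_def by (auto elim: AE_mp)
lemma L2_eq_refl_fun: "f = g \<Longrightarrow> L2_eq M f g"
  unfolding L2_eq_def by auto
lemma L2_eq_circ: "(\<And>x. x \<in> circle \<Longrightarrow> f x = g x) \<Longrightarrow> L2_eq M f g"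
  unfolding L2_eq_def using sp by (auto intro: AE_I2)

lemma C_scale: "f \<in> L2 M \<Longrightarrow> L2_eq M (C (\<lambda>x. a * f x)) (\<lambda>x. cnj a * C f x)"
  using C_lin[of f f a 0] by simp
lemma C_add: "f \<in> L2 M \<Longrightarrow> g \<in> L2 M \<Longrightarrow> L2_eq M (C (\<lambda>x. f x + g x)) (\<lambda>x. C f x + C g x)"
  using C_lin[of f g 1 1] by simp


lemma cont_cplx: "continuous_on S p \<Longrightarrow> continuous_on S (\<lambda>x. complex_of_real (p x))"
  by (intro continuous_intros)

lemma poly_cont: "real_polynomial_function p \<Longrightarrow> continuous_on S p"
  by (simp add: continuous_on_polymonial_function real_polynomial_function_eq)

definition Q :: "(complex \<Rightarrow> real) \<Rightarrow> bool" where
  "Q p \<longleftrightarrow> (\<forall>f\<in>L2 M. L2_eq M (C (\<lambda>x. complex_of_real (p x) * f x)) (\<lambda>x. complex_of_real (p (cnj x)) * C f x))"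

lemma Q_const: "Q (\<lambda>x. c)"
  unfolding Q_def using C_scale[of _ "complex_of_real c"] by simp

lemma Q_add:
  assumes p: "continuous_on circle p" and q: "continuous_on circle q" and Qp: "Q p" and Qq: "Q q"
  shows "Q (\<lambda>x. p x + q x)"
  unfolding Q_def
proof
  fix f assume f: "f \<in> L2 M"
  define pf where "pf = (\<lambda>x. complex_of_real (p x) * f x)"
  define qf where "qf = (\<lambda>x. complex_of_real (q x) * f x)"
  have pfL: "pf \<in> L2 M" unfolding pf_def by (rule L2_mult[OF cont_cplx[OF p] f])
  have qfL: "qf \<in> L2 M" unfolding qf_def by (rule L2_mult[OF cont_cplx[OF q] f])
  have e1: "(\<lambda>x. complex_of_real (p x + q x) * f x) = (\<lambda>x. pf x + qf x)"
    unfolding pf_def qf_def by (simp add: distrib_right)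
  have 1: "AE x in M. C (\<lambda>x. pf x + qf x) x = C pf x + C qf x"
    using C_add[OF pfL qfL] unfolding L2_eq_def .
  have 2: "AE x in M. C pf x = complex_of_real (p (cnj x)) * C f x"
    using Qp f unfolding Q_def L2_eq_def pf_def by auto
  have 3: "AE x in M. C qf x = complex_of_real (q (cnj x)) * C f x"
    using Qq f unfolding Q_def L2_eq_def qf_def by auto
  show "L2_eq M (C (\<lambda>x. complex_of_real (p x + q x) * f x)) (\<lambda>x. complex_of_real (p (cnj x) + q (cnj x)) * C f x)"
    unfolding e1 L2_eq_def using 1 2 3 by eventually_elim (simp add: distrib_right)
qed

lemma Q_mult:
  assumes p: "continuous_on circle p" and q: "continuous_on circle q" and Qp: "Q p" and Qq: "Q q"
  shows "Q (\<lambda>x. p x * q x)"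
  unfolding Q_def
proof
  fix f assume f: "f \<in> L2 M"
  define qf where "qf = (\<lambda>x. complex_of_real (q x) * f x)"
  have qfL: "qf \<in> L2 M" unfolding qf_def by (rule L2_mult[OF cont_cplx[OF q] f])
  have e1: "(\<lambda>x. complex_of_real (p x * q x) * f x) = (\<lambda>x. complex_of_real (p x) * qf x)"
    unfolding qf_def by (simp add: mult.assoc)
  have 2: "AE x in M. C (\<lambda>x. complex_of_real (p x) * qf x) x = complex_of_real (p (cnj x)) * C qf x"
    using Qp qfL unfolding Q_def L2_eq_def by auto
  have 3: "AE x in M. C qf x = complex_of_real (q (cnj x)) * C f x"
    using Qq f unfolding Q_def L2_eq_def qf_def by auto
  show "L2_eq M (C (\<lambda>x. complex_of_real (p x * q x) * f x)) (\<lambda>x. complex_of_real (p (cnj x) * q (cnj x)) * C f x)"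
    unfolding e1 L2_eq_def using 2 3 by eventually_elim (simp add: mult.assoc)
qed

lemma circle_ne0: "x \<in> circle \<Longrightarrow> x \<noteq> 0" by auto

lemma cont_inv: "continuous_on circle (\<lambda>x::complex. inverse x)"
  by (intro continuous_intros) auto

lemma C_xi: "f \<in> L2 M \<Longrightarrow> AE x in M. C (\<lambda>x. x * f x) x = x * C f x"
  using comm unfolding L2_eq_def mult_xi_def by auto

lemma C_inv:
  assumes f: "f \<in> L2 M"
  shows "AE x in M. C (\<lambda>x. inverse x * f x) x = inverse x * C f x"
proof -
  define u where "u = (\<lambda>x. inverse x * f x)"
  have uL: "u \<in> L2 M" unfolding u_def by (rule L2_mult[OF cont_inv f])
  have xuL: "(\<lambda>x. x * u x) \<in> L2 M" by (rule L2_mult[OF _ uL]) (intro continuous_intros)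
  have "L2_eq M (\<lambda>x. x * u x) f" unfolding u_def
  proof (rule L2_eq_circ)
    fix x :: complex assume "x \<in> circle"
    hence "x \<noteq> 0" by auto
    thus "x * (inverse x * f x) = f x" by (simp add: mult.assoc[symmetric])
  qed
  hence 1: "AE x in M. C (\<lambda>x. x * u x) x = C f x" using C_cong[OF xuL f] unfolding L2_eq_def by auto
  have 2: "AE x in M. C (\<lambda>x. x * u x) x = x * C u x" by (rule C_xi[OF uL])
  have 3: "AE x in M. x \<in> circle" using sp by (metis AE_space)
  show ?thesis using 1 2 3 unfolding u_def[symmetric]
  proof eventually_elim
    case (elim x)
    hence "x \<noteq> 0" by auto
    with elim show ?case by (metis mult.assoc left_inverse mult_1)
  qed
qed

lemma Re_circ: "cmod x = 1 \<Longrightarrow> complex_of_real (Re x) = 1/2 * x + 1/2 * inverse x"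
  by (simp add: circle_inverse complex_eq_iff)
lemma Im_circ: "cmod x = 1 \<Longrightarrow> complex_of_real (Im x) = - \<i>/2 * x + \<i>/2 * inverse x"
  by (simp add: circle_inverse complex_eq_iff)


lemma Q_lin2:
  assumes p: "continuous_on circle p"
    and e1: "\<And>x. x \<in> circle \<Longrightarrow> complex_of_real (p x) = a * x + b * inverse x"
    and e2: "\<And>x. x \<in> circle \<Longrightarrow> complex_of_real (p (cnj x)) = cnj a * x + cnj b * inverse x"
  shows "Q p"
  unfolding Q_def
proof
  fix f assume f: "f \<in> L2 M"
  define xf where "xf = (\<lambda>x. x * f x)"
  define uf where "uf = (\<lambda>x. inverse x * f x)"
  define g where "g = (\<lambda>x. a * xf x + b * uf x)"
  have xfL: "xf \<in> L2 M" unfolding xf_def by (rule L2_mult[OF _ f]) (intro continuous_intros)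
  have ufL: "uf \<in> L2 M" unfolding uf_def by (rule L2_mult[OF cont_inv f])
  have "g = (\<lambda>x. (a * x + b * inverse x) * f x)" unfolding g_def xf_def uf_def
    by (simp add: algebra_simps fun_eq_iff)
  also have "\<dots> \<in> L2 M" by (rule L2_mult[OF _ f]) (intro continuous_intros, auto)
  finally have gL: "g \<in> L2 M" .
  have pL: "(\<lambda>x. complex_of_real (p x) * f x) \<in> L2 M" by (rule L2_mult[OF cont_cplx[OF p] f])
  have "L2_eq M (\<lambda>x. complex_of_real (p x) * f x) g" unfolding g_def xf_def uf_def
    by (rule L2_eq_circ) (simp add: e1 algebra_simps)
  hence 1: "AE x in M. C (\<lambda>x. complex_of_real (p x) * f x) x = C g x"
    using C_cong[OF pL gL] unfolding L2_eq_def by auto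
  have 2: "AE x in M. C g x = cnj a * C xf x + cnj b * C uf x"
    using C_lin[OF xfL ufL, of a b] unfolding L2_eq_def g_def by auto
  have 3: "AE x in M. C xf x = x * C f x" unfolding xf_def by (rule C_xi[OF f])
  have 4: "AE x in M. C uf x = inverse x * C f x" unfolding uf_def by (rule C_inv[OF f])
  have 5: "AE x in M. x \<in> circle" using sp by (metis AE_space)
  show "L2_eq M (C (\<lambda>x. complex_of_real (p x) * f x)) (\<lambda>x. complex_of_real (p (cnj x)) * C f x)"
    unfolding L2_eq_def using 1 2 3 4 5
  proof eventually_elim
    case (elim x)
    thus ?case by (simp add: e2 algebra_simps)
  qed
qed

lemma Q_Re: "Q Re"
  by (rule Q_lin2[of _ "1/2" "1/2"]) (auto intro: continuous_intros simp: Re_circ)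

lemma Q_Im: "Q Im"
proof (rule Q_lin2[of _ "-\<i>/2" "\<i>/2"])
  show "continuous_on circle Im" by (intro continuous_intros)
  fix x :: complex assume "x \<in> circle"
  hence x: "cmod x = 1" by simp
  show "complex_of_real (Im x) = - \<i> / 2 * x + \<i> / 2 * inverse x" using Im_circ[OF x] .
  have "complex_of_real (Im (cnj x)) = - complex_of_real (Im x)" by simp
  also have "\<dots> = cnj (- \<i> / 2) * x + cnj (\<i> / 2) * inverse x" using Im_circ[OF x] by simp
  finally show "complex_of_real (Im (cnj x)) = cnj (- \<i> / 2) * x + cnj (\<i> / 2) * inverse x" .
qed

lemma bl_decomp:
  assumes "bounded_linear l"
  shows "l = (\<lambda>x. Re x * l 1 + Im x * l \<i>)"
proof
  interpret bounded_linear l by fact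
  fix x :: complex
  have "x = Re x *\<^sub>R 1 + Im x *\<^sub>R \<i>" by (simp add: complex_eq_iff)
  hence "l x = l (Re x *\<^sub>R 1 + Im x *\<^sub>R \<i>)" by simp
  also have "\<dots> = Re x * l 1 + Im x * l \<i>"
    by (simp add: add scaleR)
  finally show "l x = Re x * l 1 + Im x * l \<i>" .
qed

lemma poly_Q: "real_polynomial_function p \<Longrightarrow> Q p"
proof (induction rule: real_polynomial_function.induct)
  case (linear l)
  have c1: "continuous_on circle (\<lambda>x::complex. Re x * l 1)" by (intro continuous_intros)
  have c2: "continuous_on circle (\<lambda>x::complex. Im x * l \<i>)" by (intro continuous_intros)
  have "Q (\<lambda>x. Re x * l 1 + Im x * l \<i>)"
    by (rule Q_add[OF c1 c2]; rule Q_mult) (auto intro: continuous_intros Q_Re Q_Im Q_const)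
  thus ?case using bl_decomp[OF linear] by simp
next
  case (const c)
  then show ?case by (rule Q_const)
next
  case (add f g)
  then show ?case using Q_add poly_cont by blast
next
  case (mult f g)
  then show ?case using Q_mult poly_cont by blast
qed


lemma poly_ident:
  assumes p: "real_polynomial_function p"
  shows "(\<integral>x. (p x)\<^sup>2 \<partial>M) = (\<integral>x. (p (cnj x))\<^sup>2 * (cmod (C (\<lambda>x. 1) x))\<^sup>2 \<partial>M)"
proof -
  define g where "g = C (\<lambda>x. 1)"
  define u where "u = (\<lambda>x. complex_of_real (p x) * 1)"
  have pc: "continuous_on circle p" by (rule poly_cont[OF p])
  have pcc: "continuous_on circle (\<lambda>x. p (cnj x))"
  proof -
    have "continuous_on UNIV p" by (rule poly_cont[OF p])
    thus ?thesis by (rule continuous_on_compose2) (intro continuous_intros, auto)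
  qed
  have uL: "u \<in> L2 M" unfolding u_def by (rule L2_mult[OF cont_cplx[OF pc] one_L2])
  have gL: "g \<in> L2 M" unfolding g_def by (rule C_L2[OF one_L2])
  have "L2_eq M (C u) (\<lambda>x. complex_of_real (p (cnj x)) * g x)"
    using poly_Q[OF p] one_L2 unfolding Q_def u_def g_def by (rule bspec)
  hence ae: "AE x in M. (cmod (C u x))\<^sup>2 = (p (cnj x))\<^sup>2 * (cmod (g x))\<^sup>2"
    unfolding L2_eq_def by eventually_elim (simp add: norm_mult power_mult_distrib)
  have CuL: "C u \<in> L2 M" by (rule C_L2[OF uL])
  have m1: "(\<lambda>x. (cmod (C u x))\<^sup>2) \<in> borel_measurable M" using CuL unfolding L2_def by auto
  have pm: "(\<lambda>x. p (cnj x)) \<in> borel_measurable M" by (rule meas_cont[OF pcc])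
  have gm: "g \<in> borel_measurable M" using gL unfolding L2_def by auto
  have m2: "(\<lambda>x. (p (cnj x))\<^sup>2 * (cmod (g x))\<^sup>2) \<in> borel_measurable M"
    using pm gm by measurable
  have "L2_norm M (C u) = L2_norm M u" by (rule C_norm[OF uL])
  hence "sqrt (\<integral>x. (cmod (C u x))\<^sup>2 \<partial>M) = sqrt (\<integral>x. (cmod (u x))\<^sup>2 \<partial>M)"
    unfolding L2_norm_def .
  hence "(\<integral>x. (cmod (C u x))\<^sup>2 \<partial>M) = (\<integral>x. (cmod (u x))\<^sup>2 \<partial>M)"
    by (simp only: real_sqrt_eq_iff)
  moreover have "(\<integral>x. (cmod (C u x))\<^sup>2 \<partial>M) = (\<integral>x. (p (cnj x))\<^sup>2 * (cmod (g x))\<^sup>2 \<partial>M)"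
    by (rule integral_cong_AE[OF m1 m2 ae])
  moreover have "(\<lambda>x. (cmod (u x))\<^sup>2) = (\<lambda>x. (p x)\<^sup>2)" unfolding u_def by simp
  ultimately show ?thesis unfolding g_def by simp
qed


lemma compact_sets: "compact K \<Longrightarrow> K \<subseteq> circle \<Longrightarrow> K \<in> sets M"
  unfolding st by (subst sets_restrict_space_iff) (auto intro: borel_closed compact_imp_closed)

lemma compact_null:
  assumes K: "compact K" "K \<subseteq> circle" and KA: "cnj ` K \<subseteq> A" and A: "A \<in> null_sets M"
  shows "emeasure M K = 0"
proof (cases "K = {}")
  case True thus ?thesis by simp
next
  case Kne: False
  interpret finite_measure M by (rule fin)
  have Kc: "closed K" using K by (simp add: compact_imp_closed)
  have KM: "K \<in> sets M" by (rule compact_sets[OF K])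
  define g where "g = C (\<lambda>x. 1)"
  have gL: "g \<in> L2 M" unfolding g_def by (rule C_L2[OF one_L2])
  have gm: "g \<in> borel_measurable M" and gi: "integrable M (\<lambda>x. (cmod (g x))\<^sup>2)"
    using gL unfolding L2_def by auto
  define \<phi> where "\<phi> = (\<lambda>(n::nat) x. max 0 (1 - real (Suc n) * infdist x K))"
  have phic: "continuous_on circle (\<phi> n)" for n
    unfolding \<phi>_def by (intro continuous_intros)
  have phi01: "0 \<le> \<phi> n x \<and> \<phi> n x \<le> 1" for n x
    unfolding \<phi>_def using infdist_nonneg[of x K] by auto
  have "\<forall>n. \<exists>q. real_polynomial_function q \<and> (\<forall>x\<in>circle. \<bar>\<phi> n x - q x\<bar> < inverse (real (Suc n)))"
  proof
    fix n
    obtain q where "real_polynomial_function q" "\<And>x. x \<in> circle \<Longrightarrow> \<bar>\<phi> n x - q x\<bar> < inverse (real (Suc n))"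
      using Stone_Weierstrass_real_polynomial_function[OF compact_sphere phic, of "inverse (real (Suc n))"]
      by auto
    thus "\<exists>q. real_polynomial_function q \<and> (\<forall>x\<in>circle. \<bar>\<phi> n x - q x\<bar> < inverse (real (Suc n)))" by blast
  qed
  then obtain P where Pp: "\<And>n. real_polynomial_function (P n)"
    and Pa: "\<And>n x. x \<in> circle \<Longrightarrow> \<bar>\<phi> n x - P n x\<bar> < inverse (real (Suc n))"
    by metis
  have phil: "(\<lambda>n. \<phi> n x) \<longlonglongrightarrow> indicator K x" for x
  proof (cases "x \<in> K")
    case True
    hence "infdist x K = 0" by simp
    thus ?thesis using True unfolding \<phi>_def by simp
  next
    case False
    hence d: "infdist x K > 0" using in_closed_iff_infdist_zero[OF Kc Kne, of x] infdist_nonneg[of x K] by auto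
    obtain n0 :: nat where n0: "inverse (infdist x K) < real n0" using reals_Archimedean2 by blast
    have "eventually (\<lambda>n. \<phi> n x = 0) sequentially"
      unfolding eventually_sequentially
    proof (intro exI allI impI)
      fix n assume "n0 \<le> n"
      hence "inverse (infdist x K) < real (Suc n)" using n0 by simp
      hence "1 < real (Suc n) * infdist x K" using d by (simp add: field_simps)
      thus "\<phi> n x = 0" unfolding \<phi>_def by simp
    qed
    hence "(\<lambda>n. \<phi> n x) \<longlonglongrightarrow> 0" by (rule tendsto_eventually)
    thus ?thesis using False by simp
  qed
  have Pl: "(\<lambda>n. P n x) \<longlonglongrightarrow> indicator K x" if x: "x \<in> circle" for x
  proof -
    have "(\<lambda>n. P n x - \<phi> n x) \<longlonglongrightarrow> 0"
    proof (rule Lim_null_comparison[OF _ LIMSEQ_inverse_real_of_nat])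
      show "\<forall>\<^sub>F n in sequentially. norm (P n x - \<phi> n x) \<le> inverse (real (Suc n))"
        using Pa[OF x] by (auto intro: always_eventually less_imp_le simp: abs_minus_commute)
    qed
    from tendsto_add[OF this phil[of x]] show ?thesis by simp
  qed
  have Pb: "(P n x)\<^sup>2 \<le> 4" if x: "x \<in> circle" for n x
  proof -
    have "\<bar>P n x\<bar> \<le> 2"
      using Pa[OF x, of n] phi01[of n x] inverse_le_1_iff[of "real (Suc n)"] by auto
    hence "\<bar>P n x\<bar>\<^sup>2 \<le> 2\<^sup>2" by (intro power_mono) auto
    thus ?thesis by simp
  qed
  have Pc: "continuous_on UNIV (P n)" for n by (rule poly_cont[OF Pp])
  have Pm: "P n \<in> borel_measurable M" for n by (rule meas_cont) (rule poly_cont[OF Pp])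
  have Pcc: "continuous_on circle (\<lambda>x. P n (cnj x))" for n
    using Pc[of n] by (rule continuous_on_compose2) (intro continuous_intros, auto)
  have Pcm: "(\<lambda>x. P n (cnj x)) \<in> borel_measurable M" for n by (rule meas_cont[OF Pcc])
  have cm: "cnj \<in> measurable M borel" by (rule meas_cont) (intro continuous_intros)
  have Kb: "K \<in> sets borel" using Kc by (rule borel_closed)
  have icm: "(\<lambda>x. indicator K (cnj x) :: real) \<in> borel_measurable M"
    using measurable_compose[OF cm borel_measurable_indicator[OF Kb]] by (simp add: o_def)
  have sp': "\<And>x. x \<in> space M \<longleftrightarrow> x \<in> circle" using sp by simp
  have L: "(\<lambda>n. \<integral>x. (P n x)\<^sup>2 \<partial>M) \<longlonglongrightarrow> (\<integral>x. indicator K x \<partial>M)"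
  proof (rule integral_dominated_convergence[where w="\<lambda>x. 4"])
    show "(\<lambda>x. indicator K x :: real) \<in> borel_measurable M" using KM by simp
    show "(\<lambda>x. (P n x)\<^sup>2) \<in> borel_measurable M" for n using Pm[of n] by measurable
    show "integrable M (\<lambda>x. 4::real)" by simp
    show "AE x in M. (\<lambda>n. (P n x)\<^sup>2) \<longlonglongrightarrow> indicator K x"
    proof (rule AE_I2)
      fix x assume "x \<in> space M"
      hence "x \<in> circle" using sp by simp
      have sq: "(indicator K x :: real)\<^sup>2 = indicator K x" by (simp add: indicator_def)
      show "(\<lambda>n. (P n x)\<^sup>2) \<longlonglongrightarrow> indicator K x"
        using tendsto_power[OF Pl[OF \<open>x \<in> circle\<close>], of 2] unfolding sq .
    qed
    show "AE x in M. norm ((P n x)\<^sup>2) \<le> 4" for n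
      by (rule AE_I2) (use Pb sp in auto)
  qed
  have R: "(\<lambda>n. \<integral>x. (P n (cnj x))\<^sup>2 * (cmod (g x))\<^sup>2 \<partial>M) \<longlonglongrightarrow> (\<integral>x. indicator K (cnj x) * (cmod (g x))\<^sup>2 \<partial>M)"
  proof (rule integral_dominated_convergence[where w="\<lambda>x. 4 * (cmod (g x))\<^sup>2"])
    show "(\<lambda>x. indicator K (cnj x) * (cmod (g x))\<^sup>2 :: real) \<in> borel_measurable M"
      using icm gm by measurable
    show "(\<lambda>x. (P n (cnj x))\<^sup>2 * (cmod (g x))\<^sup>2) \<in> borel_measurable M" for n
      using Pcm[of n] gm by measurable
    show "integrable M (\<lambda>x. 4 * (cmod (g x))\<^sup>2)" using gi by simp
    show "AE x in M. (\<lambda>n. (P n (cnj x))\<^sup>2 * (cmod (g x))\<^sup>2) \<longlonglongrightarrow> indicator K (cnj x) * (cmod (g x))\<^sup>2"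
    proof (rule AE_I2)
      fix x assume "x \<in> space M"
      hence cx: "cnj x \<in> circle" using sp by simp
      have sq: "(indicator K (cnj x) :: real)\<^sup>2 = indicator K (cnj x)" by (simp add: indicator_def)
      show "(\<lambda>n. (P n (cnj x))\<^sup>2 * (cmod (g x))\<^sup>2) \<longlonglongrightarrow> indicator K (cnj x) * (cmod (g x))\<^sup>2"
        using tendsto_mult[OF tendsto_power[OF Pl[OF cx], of 2] tendsto_const[of "(cmod (g x))\<^sup>2"]]
        unfolding sq .
    qed
    show "AE x in M. norm ((P n (cnj x))\<^sup>2 * (cmod (g x))\<^sup>2) \<le> 4 * (cmod (g x))\<^sup>2" for n
    proof (rule AE_I2)
      fix x assume "x \<in> space M"
      hence "cnj x \<in> circle" using sp by simp
      hence "(P n (cnj x))\<^sup>2 \<le> 4" by (rule Pb)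
      thus "norm ((P n (cnj x))\<^sup>2 * (cmod (g x))\<^sup>2) \<le> 4 * (cmod (g x))\<^sup>2"
        by (simp add: mult_right_mono)
    qed
  qed
  have R0: "(\<integral>x. indicator K (cnj x) * (cmod (g x))\<^sup>2 \<partial>M) = 0"
  proof (rule integral_eq_zero_AE)
    show "AE x in M. indicator K (cnj x) * (cmod (g x))\<^sup>2 = (0::real)"
      using AE_not_in[OF A]
    proof eventually_elim
      case (elim x)
      have "cnj x \<notin> K"
      proof
        assume "cnj x \<in> K"
        hence "cnj (cnj x) \<in> A" using KA by blast
        thus False using elim by simp
      qed
      thus ?case by simp
    qed
  qed
  have eq: "(\<integral>x. (P n x)\<^sup>2 \<partial>M) = (\<integral>x. (P n (cnj x))\<^sup>2 * (cmod (g x))\<^sup>2 \<partial>M)" for n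
    unfolding g_def by (rule poly_ident[OF Pp])
  have "(\<integral>x. indicator K x \<partial>M) = (\<integral>x. indicator K (cnj x) * (cmod (g x))\<^sup>2 \<partial>M)"
    using L R unfolding eq by (rule LIMSEQ_unique)
  hence "measure M (K \<inter> space M) = 0" using R0 by simp
  moreover have "K \<inter> space M = K" using K sp by auto
  ultimately have "measure M K = 0" by simp
  thus ?thesis using emeasure_eq_measure by simp
qed


lemma null_conj:
  assumes A: "A \<in> null_sets M"
  shows "emeasure M (cnj ` A) = 0"
proof (cases "cnj ` A \<in> sets M")
  case False thus ?thesis by (simp add: emeasure_notin_sets)
next
  case True
  define B where "B = cnj ` A"
  have BM: "B \<in> sets M" using True B_def by simp
  have Bc: "B \<subseteq> circle" using sets.sets_into_space[OF BM] sp by simp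
  have cb: "circle \<in> sets borel" by (intro borel_closed) simp
  have Bb: "B \<in> sets borel"
    using BM unfolding st using sets_restrict_space_iff[of circle borel B] cb by auto
  have idm: "(\<lambda>x. x) \<in> measurable M borel" by (rule meas_cont) (intro continuous_intros)
  define M' where "M' = distr M borel (\<lambda>x. x)"
  have sM': "sets M' = sets borel" unfolding M'_def by simp
  have eM': "emeasure M' X = emeasure M (X \<inter> space M)" if "X \<in> sets borel" for X
    unfolding M'_def using emeasure_distr[OF idm that] by (simp add: Int_commute)
  interpret finite_measure M by (rule fin)
  have fM': "emeasure M' (space M') \<noteq> \<infinity>"
    using eM'[of UNIV] sets_eq_imp_space_eq[OF sM'] by simp
  have "emeasure M' B = (SUP K \<in> {K. K \<subseteq> B \<and> compact K}. emeasure M' K)"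
    by (rule inner_regular[OF sM' fM' Bb])
  also have "\<dots> = (SUP K \<in> {K. K \<subseteq> B \<and> compact K}. (0::ennreal))"
  proof (rule SUP_cong[OF refl])
    fix K assume "K \<in> {K. K \<subseteq> B \<and> compact K}"
    hence K: "K \<subseteq> B" "compact K" by auto
    have "emeasure M' K = emeasure M (K \<inter> space M)"
      using K by (intro eM') (simp add: borel_closed compact_imp_closed)
    also have "K \<inter> space M = K" using K Bc sp by auto
    also have "emeasure M K = 0"
    proof (rule compact_null[OF K(2) _ _ A])
      show "K \<subseteq> circle" using K Bc by auto
      show "cnj ` K \<subseteq> A" using K unfolding B_def by auto
    qed
    finally show "emeasure M' K = 0" .
  qed
  also have "\<dots> = 0"
  proof (rule SUP_const)
    have "{} \<in> {K. K \<subseteq> B \<and> compact K}" by simp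
    thus "{K. K \<subseteq> B \<and> compact K} \<noteq> {}" by blast
  qed
  finally have "emeasure M' B = 0" .
  moreover have "emeasure M' B = emeasure M B" using eM'[OF Bb] Bc sp by (simp add: Int_absorb2)
  ultimately show ?thesis unfolding B_def by simp
qed

end

theorem proposition5p1:
  fixes M :: "complex measure"
    and C :: "(complex \<Rightarrow> complex) \<Rightarrow> (complex \<Rightarrow> complex)"
  assumes "borel_measure_on_circle M"
    and "conjugation_L2 M C"
    and "\<forall>f\<in>L2 M. L2_eq M (C (mult_xi f)) (mult_xi (C f))"
  shows "absolutely_continuous M (conj_measure M)"
proof -
  interpret cs M C using assms by unfold_locales
  have ss: "sigma_sets (space M) (sets M) = sets M" by (rule sets.sigma_sets_eq)
  show ?thesis unfolding absolutely_continuous_def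
  proof
    fix A assume A: "A \<in> null_sets M"
    hence AM: "A \<in> sets M" by auto
    have sets_c: "sets (conj_measure M) = sets M"
      unfolding conj_measure_def using sets.space_closed[of M] by (simp add: ss)
    have "emeasure (conj_measure M) A = 0"
      unfolding conj_measure_def emeasure_measure_of_conv using null_conj[OF A] by simp
    thus "A \<in> null_sets (conj_measure M)" using AM sets_c by auto
  qed
qed

end
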